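(* Let $\beta\in(0,1)$ and $1\le t\le n$. With $q_{n,s}:=\beta^{n-s}\frac{1-\beta}{1-\beta^n}$ and $\lambda_{n,t}:=\sum_{i=t}^n\sum_{j=1}^{t-1}q_{n,i}q_{n,j}(i-j)$, it holds that $$\lambda_{n,t}\le\frac{(n-t+1)\beta^{n-t+1}}{1-\beta^n}.$$
   Context: An empty sum equals $0$. *)

theory Defs
  imports Complex_Main
begin

definition q :: "real \<Rightarrow> nat \<Rightarrow> nat \<Rightarrow> real" where
  "q \<beta> n s = \<beta> ^ (n - s) * ((1 - \<beta>) / (1 - \<beta> ^ n))"

definition lam :: "real \<Rightarrow> nat \<Rightarrow> nat \<Rightarrow> real" where
  "lam \<beta> n t = (\<Sum>i=t..n. \<Sum>j=1..t-1. q \<beta> n i * q \<beta> n j * (real i - real j))"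

end

theory Submission
  imports Defs
begin

lemma inner_sum:
  fixes \<beta> x :: real
  shows "k \<le> n \<Longrightarrow> (1-\<beta>)^2 * (\<Sum>j=1..k. \<beta>^(n-j) * (x - real j))
     = \<beta>^(n-k) * ((x - real k)*(1-\<beta>)+\<beta>) - \<beta>^n * (x*(1-\<beta>)+\<beta>)"
proof (induction k)
  case 0
  then show ?case by (simp add: algebra_simps)
next
  case (Suc k)
  have e: "\<beta>^(n-k) = \<beta> * \<beta>^(n - Suc k)" using Suc.prems
    by (metis Suc_diff_Suc Suc_le_lessD power_Suc)
  have "(1-\<beta>)^2 * (\<Sum>j=1..Suc k. \<beta>^(n-j) * (x - real j))
      = (1-\<beta>)^2 * (\<Sum>j=1..k. \<beta>^(n-j) * (x - real j)) + (1-\<beta>)^2 * (\<beta>^(n - Suc k) * (x - real (Suc k)))"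
    by (simp add: algebra_simps)
  also have "\<dots> = \<beta>^(n-k) * ((x - real k)*(1-\<beta>)+\<beta>) - \<beta>^n * (x*(1-\<beta>)+\<beta>) + (1-\<beta>)^2 * (\<beta>^(n - Suc k) * (x - real (Suc k)))"
    using Suc by simp
  also have "\<dots> = \<beta>^(n - Suc k) * ((x - real (Suc k))*(1-\<beta>)+\<beta>) - \<beta>^n * (x*(1-\<beta>)+\<beta>)"
    unfolding e by (simp add: algebra_simps power2_eq_square)
  finally show ?case .
qed

lemma G_sum:
  fixes \<beta> :: real
  assumes "t \<le> N"
  shows "(\<Sum>i=t..N. \<beta>^(N-i) * ((real i + 1 - real t)*(1-\<beta>)+\<beta>)) = real N + 1 - real t"
  using assms
proof (induction N rule: dec_induct)
  case base
  then show ?case by simp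
next
  case (step N)
  define S where "S = (\<Sum>i=t..N. \<beta>^(N-i) * ((real i + 1 - real t)*(1-\<beta>)+\<beta>))"
  have h1: "(\<Sum>i=t..Suc N. \<beta>^(Suc N-i) * ((real i + 1 - real t)*(1-\<beta>)+\<beta>))
     = (\<Sum>i=t..N. \<beta>^(Suc N-i) * ((real i + 1 - real t)*(1-\<beta>)+\<beta>)) + ((real (Suc N) + 1 - real t)*(1-\<beta>)+\<beta>)"
    using step by simp
  have h2: "(\<Sum>i=t..N. \<beta>^(Suc N-i) * ((real i + 1 - real t)*(1-\<beta>)+\<beta>)) = \<beta> * S"
    unfolding sum_distrib_left S_def
    by (rule sum.cong) (auto simp: Suc_diff_le)
  have hS: "S = real N + 1 - real t" using step.IH S_def by simp
  show ?case unfolding h1 h2 hS by (simp add: algebra_simps)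
qed

theorem proposition5:
  fixes \<beta> :: real and n t :: nat
  assumes "0 < \<beta>" "\<beta> < 1" "1 \<le> t" "t \<le> n"
  shows "lam \<beta> n t \<le> real (n - t + 1) * \<beta> ^ (n - t + 1) / (1 - \<beta> ^ n)"
proof -
  define c where "c = (1-\<beta>)/(1-\<beta>^n)"
  define m where "m = n - t + 1"
  obtain k where tk: "t = Suc k" using assms(3) by (cases t) auto
  have bn: "\<beta>^n < 1" using assms by (simp add: power_less_one_iff)
  have bn': "0 < 1 - \<beta>^n" using bn by simp
  have lam_eq: "lam \<beta> n t = c^2 * (\<Sum>i=t..n. \<beta>^(n-i) * (\<Sum>j=1..k. \<beta>^(n-j) * (real i - real j)))"
    unfolding lam_def q_def c_def[symmetric] tk
    by (simp add: sum_distrib_left power2_eq_square algebra_simps)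
  have c2: "c^2 = (1-\<beta>)^2 / (1-\<beta>^n)^2" unfolding c_def by (simp add: power_divide)
  define F where "F i = \<beta>^(n-k) * ((real i - real k)*(1-\<beta>)+\<beta>) - \<beta>^n * (real i*(1-\<beta>)+\<beta>)" for i :: nat
  have inn: "(1-\<beta>)^2 * (\<Sum>j=1..k. \<beta>^(n-j) * (real i - real j)) = F i" for i
    unfolding F_def using inner_sum[of k n \<beta> "real i"] tk assms by simp
  have "(1-\<beta>^n)^2 * lam \<beta> n t = (\<Sum>i=t..n. \<beta>^(n-i) * F i)"
    unfolding lam_eq c2 using bn'
    by (simp add: sum_distrib_left inn[symmetric] algebra_simps)
  also have "\<dots> \<le> (\<Sum>i=t..n. \<beta>^m * (\<beta>^(n-i) * ((real i + 1 - real t)*(1-\<beta>)+\<beta>)) - \<beta>^m * \<beta>^n)"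
  proof (rule sum_mono)
    fix i assume i: "i \<in> {t..n}"
    have nk: "n - k = m" unfolding m_def tk using assms tk by simp
    have a: "\<beta>^(n-i) * (\<beta>^(n-k) * ((real i - real k)*(1-\<beta>)+\<beta>)) = \<beta>^m * (\<beta>^(n-i) * ((real i + 1 - real t)*(1-\<beta>)+\<beta>))"
      unfolding nk tk by (simp add: algebra_simps)
    have p1: "\<beta>^(n-i) \<ge> \<beta>^m"
      using i assms unfolding m_def by (intro power_decreasing) auto
    have p2: "real i*(1-\<beta>)+\<beta> \<ge> 1"
    proof -
      have "real i \<ge> 1" using i assms by auto
      hence "real i*(1-\<beta>) \<ge> 1*(1-\<beta>)" using assms by (intro mult_right_mono) auto
      thus ?thesis by simp
    qed
    have "\<beta>^(n-i) * (\<beta>^n * (real i*(1-\<beta>)+\<beta>)) \<ge> \<beta>^m * (\<beta>^n * 1)"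
      using p1 p2 assms by (intro mult_mono) auto
    thus "\<beta>^(n-i) * F i \<le> \<beta>^m * (\<beta>^(n-i) * ((real i + 1 - real t)*(1-\<beta>)+\<beta>)) - \<beta>^m * \<beta>^n"
      unfolding F_def using a by (simp add: algebra_simps)
  qed
  also have "\<dots> = \<beta>^m * (real n + 1 - real t) - real m * \<beta>^m * \<beta>^n"
    using G_sum[OF assms(4), of \<beta>] unfolding sum_subtractf sum_distrib_left[symmetric]
    using assms(4) by (simp add: m_def of_nat_diff)
  also have "\<dots> = (1-\<beta>^n) * (real m * \<beta>^m)"
    using assms unfolding m_def by (simp add: algebra_simps of_nat_diff)
  finally have "(1-\<beta>^n)^2 * lam \<beta> n t \<le> (1-\<beta>^n) * (real m * \<beta>^m)" .
  hence "(1-\<beta>^n) * lam \<beta> n t \<le> real m * \<beta>^m"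
    using bn' by (simp add: power2_eq_square mult.assoc)
  thus ?thesis using bn' unfolding m_def by (simp add: pos_le_divide_eq mult.commute)
qed

end
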